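(* Let $n>d>0$, let $\mathfrak{C}_d([n])$ be the set of all chordal $d$-uniform clutters on $[n]$, and let $i\in\{1,\ldots,n-d\}$. Write $\alpha_k(n,d)=\sum_{j=k}^{n-d+1}(-1)^{j-k}\binom{n}{d+j-1}\binom{j}{k}$ for $1\le k\le n-d$. Then: (a) $\max\{\lambda_i(\mathcal{C}): \mathcal{C}\in\mathfrak{C}_d([n]),\ \mathcal{C}\neq\mathcal{C}_{n,d}\}=\alpha_i(n,d)+\binom{n-1-i}{d-1}$; (b) if $l_0,\ldots,l_{n-d}$ is an $M$-sequence with $l_1\le d$ and $\lambda_{n-d-k}=\alpha_{n-d-k}(n,d)+l_k-l_{k+1}$ for $k=0,\ldots,n-d-1$, then $\lambda_i=\alpha_i(n,d)+\binom{n-1-i}{d-1}$ if and only if $l_{n-d-j}=\binom{n-1-j}{d-1}$ for all $j$ with $i\le j\le n-d$ and $l_{n-d-j}=0$ for all $j$ with $0\le j<i$.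
   Context: A $d$-uniform clutter on $[n]$ is a set of $d$-subsets of $[n]$; $\mathcal{C}_{n,d}$ is the set of all $d$-subsets. Submaximal circuit: a $(d-1)$-set contained in some circuit. Clique: a set all of whose $d$-subsets are circuits. $\mathrm{N}_{\mathcal{C}}(e)=\{c: e\cup\{c\}\in\mathcal{C}\}$, $\mathrm{N}_{\mathcal{C}}[e]=e\cup\mathrm{N}_{\mathcal{C}}(e)$; $e$ is simplicial if it is a submaximal circuit and $\mathrm{N}_{\mathcal{C}}[e]$ is a clique. $\mathcal{C}\setminus e=\{F\in\mathcal{C}:e\not\subset F\}$; $\mathcal{C}_{e_1\cdots e_i}$ is successive deletion. A simplicial order is a sequence $e_1,\ldots,e_r$ with $e_i$ simplicial in $\mathcal{C}_{e_1\cdots e_{i-1}}$ (in $\mathcal{C}$ for $i=1$) and $\mathcal{C}_{e_1\cdots e_r}=\emptyset$; $\mathcal{C}$ is chordal if one exists. Its multiset is $\{N_1,\ldots,N_r\}$, $N_i=|\mathrm{N}_{\mathcal{C}_{e_1\cdots e_{i-1}}}(e_i)|$ (independent of the order), and $\lambda_i(\mathcal{C})=|\{j:N_j=i\}|$. $M$-sequence: $l_0=1$ and $0\le l_{i+1}\le l_i^{\langle i\rangle}$ for $i\ge1$, where for $a=\binom{a(i)}{i}+\cdots+\binom{a(j)}{j}$ (Macaulay representation, $a(i)>\cdots>a(j)\ge j\ge1$) one sets $a^{\langle i\rangle}=\binom{a(i)+1}{i+1}+\cdots+\binom{a(j)+1}{j+1}$, $0^{\langle i\rangle}=0$. *)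

theory Defs
  imports Main
begin

definition all_dsets :: "nat \<Rightarrow> nat \<Rightarrow> nat set set" where
  "all_dsets n d = {F. F \<subseteq> {1..n} \<and> card F = d}"

definition uniform_clutter :: "nat \<Rightarrow> nat \<Rightarrow> nat set set \<Rightarrow> bool" where
  "uniform_clutter n d C \<longleftrightarrow> C \<subseteq> all_dsets n d"

definition submax_circuit :: "nat \<Rightarrow> nat set set \<Rightarrow> nat set \<Rightarrow> bool" where
  "submax_circuit d C e \<longleftrightarrow> finite e \<and> card e = d - 1 \<and> (\<exists>F\<in>C. e \<subseteq> F)"

definition is_clique :: "nat \<Rightarrow> nat set set \<Rightarrow> nat set \<Rightarrow> bool" where
  "is_clique d C S \<longleftrightarrow> (\<forall>F. F \<subseteq> S \<and> finite F \<and> card F = d \<longrightarrow> F \<in> C)"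

definition open_nbhd :: "nat set set \<Rightarrow> nat set \<Rightarrow> nat set" where
  "open_nbhd C e = {c. e \<union> {c} \<in> C}"

definition closed_nbhd :: "nat set set \<Rightarrow> nat set \<Rightarrow> nat set" where
  "closed_nbhd C e = e \<union> open_nbhd C e"

definition simplicial :: "nat \<Rightarrow> nat set set \<Rightarrow> nat set \<Rightarrow> bool" where
  "simplicial d C e \<longleftrightarrow> submax_circuit d C e \<and> is_clique d C (closed_nbhd C e)"

definition del :: "nat set set \<Rightarrow> nat set \<Rightarrow> nat set set" where
  "del C e = {F \<in> C. \<not> e \<subseteq> F}"

definition dels :: "nat set set \<Rightarrow> nat set list \<Rightarrow> nat set set" where
  "dels C es = foldl del C es"

definition simplicial_order :: "nat \<Rightarrow> nat set set \<Rightarrow> nat set list \<Rightarrow> bool" where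
  "simplicial_order d C es \<longleftrightarrow>
     (\<forall>i < length es. simplicial d (dels C (take i es)) (es ! i)) \<and> dels C es = {}"

definition chordal :: "nat \<Rightarrow> nat set set \<Rightarrow> bool" where
  "chordal d C \<longleftrightarrow> (\<exists>es. simplicial_order d C es)"

definition chordal_clutter :: "nat \<Rightarrow> nat \<Rightarrow> nat set set \<Rightarrow> bool" where
  "chordal_clutter n d C \<longleftrightarrow> uniform_clutter n d C \<and> chordal d C"

(* N_i for a given order (0-based index i) *)
definition order_N :: "nat set set \<Rightarrow> nat set list \<Rightarrow> nat \<Rightarrow> nat" where
  "order_N C es i = card (open_nbhd (dels C (take i es)) (es ! i))"

(* lambda_k(C), computed from a (chosen) simplicial order; the multiset is order-independent *)
definition lam :: "nat \<Rightarrow> nat set set \<Rightarrow> nat \<Rightarrow> nat" where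
  "lam d C k = (let es = (SOME es. simplicial_order d C es) in
                 card {j. j < length es \<and> order_N C es j = k})"

definition alpha :: "nat \<Rightarrow> nat \<Rightarrow> nat \<Rightarrow> int" where
  "alpha k n d = (\<Sum>j = k..n - d + 1. (-1) ^ (j - k) * int (n choose (d + j - 1)) * int (j choose k))"

(* Macaulay representation of a w.r.t. i: the list [a(i), a(i-1), ..., a(j)] with
   a(i) > ... > a(j) >= j >= 1 and a = sum binom(a(t), t). *)
definition macaulay_rep :: "nat \<Rightarrow> nat \<Rightarrow> nat list \<Rightarrow> bool" where
  "macaulay_rep a i as \<longleftrightarrow> as \<noteq> [] \<and> length as \<le> i \<and> sorted_wrt (>) as \<and>
     last as \<ge> i + 1 - length as \<and> a = (\<Sum>t < length as. (as ! t) choose (i - t))"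

definition mac_upper :: "nat \<Rightarrow> nat \<Rightarrow> nat" where
  "mac_upper a i = (if a = 0 then 0 else
     (let as = (THE as. macaulay_rep a i as) in
        \<Sum>t < length as. (as ! t + 1) choose (i - t + 1)))"

definition M_sequence :: "(nat \<Rightarrow> nat) \<Rightarrow> nat \<Rightarrow> bool" where
  "M_sequence l m \<longleftrightarrow> l 0 = 1 \<and> (\<forall>i. 1 \<le> i \<and> i + 1 \<le> m \<longrightarrow> l (i + 1) \<le> mac_upper (l i) i)"

end

theory Submission
  imports Defs "HOL-Library.Multiset" "HOL-Library.Function_Algebras"
    "HOL-Computational_Algebra.Polynomial" "HOL-Library.Nat_Bijection"
begin

definition fscale :: "real \<Rightarrow> ('a \<Rightarrow> real) \<Rightarrow> ('a \<Rightarrow> real)" where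
  "fscale r f = (\<lambda>x. r * f x)"

interpretation fv: vector_space "fscale :: real \<Rightarrow> ('a \<Rightarrow> real) \<Rightarrow> ('a \<Rightarrow> real)"
  by unfold_locales (auto simp: fscale_def fun_eq_iff algebra_simps)

lemma sum_fun_apply: "(\<Sum>i\<in>S. f i) x = (\<Sum>i\<in>S. f i x)"
  by (induction S rule: infinite_finite_induct) auto

definition Lf :: "nat \<Rightarrow> real \<Rightarrow> (nat \<Rightarrow> real) \<Rightarrow> real" where
  "Lf a y c = (\<Sum>k\<le>a. c k * y ^ k)"

definition monm :: "nat multiset \<Rightarrow> (nat \<Rightarrow> real) \<Rightarrow> real" where
  "monm X c = prod_mset (image_mset c X)"

lemma span_mult_L:
  assumes "f \<in> fv.span (monm ` multisets_of_size {0..a} b)"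
  shows "(\<lambda>c. Lf a y c * f c) \<in> fv.span (monm ` multisets_of_size {0..a} (Suc b))"
  using assms
proof (induction rule: fv.span_induct_alt)
  case base
  then show ?case by (simp add: fv.span_zero[unfolded zero_fun_def] zero_fun_def)
next
  case (step r x g)
  from step(1) obtain X where X: "X \<in> multisets_of_size {0..a} b" and x: "x = monm X" by auto
  have "(\<lambda>c. Lf a y c * monm X c) = (\<Sum>k\<le>a. fscale (y ^ k) (monm (add_mset k X)))"
    by (auto simp: fun_eq_iff Lf_def monm_def fscale_def sum_fun_apply sum_distrib_left mult.commute mult.left_commute)
  also have "\<dots> \<in> fv.span (monm ` multisets_of_size {0..a} (Suc b))"
  proof (intro fv.span_sum fv.span_scale fv.span_base)
    fix k assume "k \<in> {..a}"
    then show "monm (add_mset k X) \<in> monm ` multisets_of_size {0..a} (Suc b)"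
      using X by (auto simp: multisets_of_size_def)
  qed
  finally have h1: "(\<lambda>c. Lf a y c * x c) \<in> fv.span (monm ` multisets_of_size {0..a} (Suc b))"
    using x by simp
  have "(\<lambda>c. Lf a y c * fscale r x c) = fscale r (\<lambda>c. Lf a y c * x c)"
    by (auto simp: fscale_def fun_eq_iff algebra_simps)
  moreover have "(\<lambda>c. Lf a y c * (fscale r x + g) c) = (\<lambda>c. Lf a y c * fscale r x c) + (\<lambda>c. Lf a y c * g c)"
    by (auto simp: fun_eq_iff algebra_simps)
  ultimately show ?case
    using h1 step.IH by (auto intro!: fv.span_add fv.span_scale)
qed

lemma span_prod_L:
  assumes "finite B"
  shows "(\<lambda>c. \<Prod>y\<in>B. Lf a (g y) c) \<in> fv.span (monm ` multisets_of_size {0..a} (card B))"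
  using assms
proof (induction B rule: finite_induct)
  case empty
  have "monm {#} = (\<lambda>c. 1)" by (auto simp: monm_def fun_eq_iff)
  then show ?case by (auto intro!: fv.span_base)
next
  case (insert y B)
  have "(\<lambda>c. \<Prod>y\<in>insert y B. Lf a (g y) c) = (\<lambda>c. Lf a (g y) c * (\<Prod>y\<in>B. Lf a (g y) c))"
    using insert by auto
  then show ?case using span_mult_L[OF insert.IH] insert by simp
qed

lemma poly_Lf:
  fixes p :: "real poly"
  assumes "degree p \<le> a"
  shows "poly p y = Lf a y (coeff p)"
proof -
  have "poly p y = (\<Sum>i\<le>degree p. coeff p i * y ^ i)" by (rule poly_altdef)
  also have "\<dots> = (\<Sum>i\<le>a. coeff p i * y ^ i)"
    by (rule sum.mono_neutral_left) (use assms in \<open>auto simp: coeff_eq_0\<close>)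
  finally show ?thesis by (simp add: Lf_def)
qed

theorem skew_bollobas:
  fixes A B :: "nat \<Rightarrow> nat set"
  assumes AB: "\<And>t. t < m \<Longrightarrow> finite (A t) \<and> card (A t) = a \<and> finite (B t) \<and> card (B t) = b \<and> A t \<inter> B t = {}"
    and skew: "\<And>s t. s < t \<Longrightarrow> t < m \<Longrightarrow> A s \<inter> B t \<noteq> {}"
  shows "m \<le> (a + b) choose a"
proof -
  define p where "p s = (\<Prod>x\<in>A s. [:- real x, 1:])" for s
  define cs where "cs s = coeff (p s)" for s
  define G where "G t = (\<lambda>c. \<Prod>y\<in>B t. Lf a (real y) c)" for t
  have degp: "degree (p s) \<le> a" if "s < m" for s
  proof -
    have "degree (p s) \<le> sum (degree \<circ> (\<lambda>x. [:- real x, 1:])) (A s)"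
      unfolding p_def using AB[OF that] by (intro degree_prod_sum_le) auto
    also have "\<dots> = card (A s)" by simp
    finally show ?thesis using AB[OF that] by simp
  qed
  have Gval: "G t (cs s) = (\<Prod>y\<in>B t. \<Prod>x\<in>A s. (real y - real x))" if "s < m" for s t
  proof -
    have "Lf a (real y) (coeff (p s)) = poly (p s) (real y)" for y
      using poly_Lf[OF degp[OF that]] by simp
    then have "G t (cs s) = (\<Prod>y\<in>B t. poly (p s) (real y))"
      unfolding G_def cs_def by simp
    also have "\<dots> = (\<Prod>y\<in>B t. \<Prod>x\<in>A s. (real y - real x))"
      unfolding p_def poly_prod by simp
    finally show ?thesis .
  qed
  have Gz: "G t (cs s) = 0" if st: "s < t" "t < m" for s t
  proof -
    have "A s \<inter> B t \<noteq> {}" using skew[OF st] .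
    then obtain z where "z \<in> A s" "z \<in> B t" by blast
    then have "(\<Prod>x\<in>A s. (real z - real x)) = 0"
      using AB[of s] st by (intro prod_zero) auto
    then have "(\<Prod>y\<in>B t. \<Prod>x\<in>A s. (real y - real x)) = 0"
      using AB[of t] st \<open>z \<in> B t\<close> by (intro prod_zero) auto
    then show ?thesis using Gval[of s t] st by simp
  qed
  have Gnz: "G t (cs t) \<noteq> 0" if tm: "t < m" for t
  proof -
    have fin: "finite (A t)" "finite (B t)" and dis: "A t \<inter> B t = {}" using AB[OF tm] by auto
    have "(\<Prod>x\<in>A t. (real y - real x)) \<noteq> 0" if yB: "y \<in> B t" for y
    proof -
      have "\<forall>x\<in>A t. real y - real x \<noteq> 0" using dis yB by auto
      then show ?thesis using fin by (simp add: prod_zero_iff)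
    qed
    then have "(\<Prod>y\<in>B t. \<Prod>x\<in>A t. (real y - real x)) \<noteq> 0"
      using fin by (simp add: prod_zero_iff)
    then show ?thesis using Gval[OF tm, of t] by simp
  qed
  have inj: "inj_on G {..<m}"
  proof (rule inj_onI)
    fix s t assume sm: "s \<in> {..<m}" and tm: "t \<in> {..<m}" and eq: "G s = G t"
    have ns: "\<not> s < t"
    proof
      assume st: "s < t"
      have "G t (cs s) = 0" using Gz st tm by simp
      moreover have "G s (cs s) \<noteq> 0" using Gnz sm by simp
      ultimately show False using eq by simp
    qed
    have nt: "\<not> t < s"
    proof
      assume ts: "t < s"
      have "G s (cs t) = 0" using Gz ts sm by simp
      moreover have "G t (cs t) \<noteq> 0" using Gnz tm by simp
      ultimately show False using eq by simp
    qed
    show "s = t" using ns nt by simp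
  qed
  define T where "T = G ` {..<m}"
  have finT: "finite T" unfolding T_def by (rule finite_imageI) simp
  have key: "f x = 0" if sum0: "(\<Sum>y\<in>T. fscale (f y) y) = 0" and xT: "x \<in> T" for f x
  proof -
    have sum0': "(\<Sum>t<m. f (G t) * G t (cs s)) = 0" for s
    proof -
      have "(\<Sum>y\<in>T. fscale (f y) y) = (\<Sum>t<m. fscale (f (G t)) (G t))"
        unfolding T_def by (rule sum.reindex[OF inj, unfolded comp_def])
      then have "(\<Sum>t<m. fscale (f (G t)) (G t)) (cs s) = 0" using sum0 by simp
      then show ?thesis by (simp add: sum_fun_apply fscale_def)
    qed
    have zz: "f (G t) = 0" if "t < m" for t
      using that
    proof (induction t rule: less_induct)
      case (less t)
      have tm: "t < m" by fact
      have IH: "f (G s) = 0" if "s < t" for s using less.IH that tm by simp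
      have "(\<Sum>u<m. f (G u) * G u (cs t)) = (\<Sum>u\<in>{t}. f (G u) * G u (cs t))"
      proof (rule sum.mono_neutral_right)
        show "finite {..<m}" by simp
        show "{t} \<subseteq> {..<m}" using tm by simp
        show "\<forall>u\<in>{..<m} - {t}. f (G u) * G u (cs t) = 0"
        proof
          fix u assume u: "u \<in> {..<m} - {t}"
          show "f (G u) * G u (cs t) = 0"
          proof (cases "u < t")
            case True then show ?thesis using IH by simp
          next
            case False then have tu: "t < u" using u by auto
            have "u < m" using u by simp
            then have "G u (cs t) = 0" using Gz tu by simp
            then show ?thesis by simp
          qed
        qed
      qed
      then have "f (G t) * G t (cs t) = 0" using sum0'[of t] by simp
      moreover have "G t (cs t) \<noteq> 0" using Gnz tm by simp
      ultimately show "f (G t) = 0" by simp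
    qed
    from xT obtain t where "t < m" "x = G t" unfolding T_def by auto
    then show "f x = 0" using zz by simp
  qed
  have indep: "fv.independent T"
    apply (rule fv.independent_if_scalars_zero)
     apply (rule finT)
    apply (erule key)
    apply assumption
    done
  have sp: "T \<subseteq> fv.span (monm ` multisets_of_size {0..a} b)"
  proof
    fix x assume "x \<in> T"
    then obtain t where t: "t < m" "x = G t" unfolding T_def by auto
    show "x \<in> fv.span (monm ` multisets_of_size {0..a} b)"
      using span_prod_L[of "B t" a real] AB[OF t(1)] t(2) unfolding G_def by simp
  qed
  have "card T \<le> card (monm ` multisets_of_size {0..a} b)"
    using fv.independent_span_bound[OF _ indep sp] by auto
  also have "\<dots> \<le> card (multisets_of_size {0..a} b)"
    by (rule card_image_le) auto
  also have "\<dots> = (a + b) choose b"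
    by (simp add: card_multisets_of_size)
  finally show ?thesis
    using inj binomial_symmetric[of a "a+b"] by (simp add: T_def card_image)
qed



lemma dels_Nil[simp]: "dels C [] = C" by (simp add: dels_def)

lemma dels_Suc: "j < length es \<Longrightarrow> dels C (take (Suc j) es) = del (dels C (take j es)) (es ! j)"
  by (simp add: dels_def take_Suc_conv_app_nth)

lemma del_subset: "del X e \<subseteq> X" by (auto simp: del_def)

lemma dels_antimono: "j \<le> k \<Longrightarrow> dels C (take k es) \<subseteq> dels C (take j es)"
proof (induction k)
  case 0 then show ?case by simp
next
  case (Suc k)
  show ?case
  proof (cases "j = Suc k")
    case True then show ?thesis by simp
  next
    case False
    then have "j \<le> k" using Suc by simp
    then have IH: "dels C (take k es) \<subseteq> dels C (take j es)" using Suc by simp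
    show ?thesis
    proof (cases "k < length es")
      case True
      then show ?thesis using IH dels_Suc[OF True, of C] del_subset by blast
    next
      case False
      then have "take (Suc k) es = take k es" by simp
      then show ?thesis using IH by simp
    qed
  qed
qed

lemma dels_sub: "dels C (take k es) \<subseteq> C"
  using dels_antimono[of 0 k C es] by simp

lemma dels_final: "length es \<le> k \<Longrightarrow> dels C (take k es) = dels C es"
  by simp

lemma open_nbhd_range:
  assumes "X \<subseteq> all_dsets n d"
  shows "open_nbhd X e \<subseteq> {1..n}"
  using assms by (auto simp: open_nbhd_def all_dsets_def)

lemma open_nbhd_notin:
  assumes "X \<subseteq> all_dsets n d" "finite e" "card e = d - 1" "0 < d" "c \<in> open_nbhd X e"
  shows "c \<notin> e"
proof
  assume "c \<in> e"
  then have "e \<union> {c} = e" by auto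
  moreover have "card (e \<union> {c}) = d" using assms by (auto simp: open_nbhd_def all_dsets_def)
  ultimately show False using assms by simp
qed

lemma simplicial_at:
  "simplicial_order d C es \<Longrightarrow> j < length es \<Longrightarrow> simplicial d (dels C (take j es)) (es ! j)"
  by (simp add: simplicial_order_def)

lemma so_e_props:
  assumes so: "simplicial_order d C es" and C: "C \<subseteq> all_dsets n d" and j: "j < length es"
  shows "finite (es!j)" "card (es!j) = d - 1" "es ! j \<subseteq> {1..n}"
proof -
  have "submax_circuit d (dels C (take j es)) (es ! j)"
    using simplicial_at[OF so j] by (simp add: simplicial_def)
  then obtain F where F: "F \<in> dels C (take j es)" "es!j \<subseteq> F" and f: "finite (es!j)" "card (es!j) = d - 1"
    by (auto simp: submax_circuit_def)
  then have "F \<in> all_dsets n d" using dels_sub C by blast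
  then show "finite (es!j)" "card (es!j) = d - 1" "es ! j \<subseteq> {1..n}"
    using F f by (auto simp: all_dsets_def)
qed

lemma so_notsub:
  assumes so: "simplicial_order d C es" and C: "C \<subseteq> all_dsets n d" and d: "0 < d"
    and st: "s < t" "t < length es"
    and ne: "open_nbhd (dels C (take t es)) (es!t) \<noteq> {}"
  shows "\<not> es!s \<subseteq> closed_nbhd (dels C (take t es)) (es!t)"
proof
  let ?X = "dels C (take t es)"
  let ?K = "closed_nbhd ?X (es!t)"
  assume sub: "es!s \<subseteq> ?K"
  have XC: "?X \<subseteq> all_dsets n d" using dels_sub C by blast
  have fs: "finite (es!s)" "card (es!s) = d - 1" using so_e_props[OF so C] st by auto
  have ft: "finite (es!t)" "card (es!t) = d - 1" "es!t \<subseteq> {1..n}" using so_e_props[OF so C] st by auto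
  obtain c where c: "c \<in> open_nbhd ?X (es!t)" using ne by auto
  have cn: "c \<notin> es!t" using open_nbhd_notin[OF XC ft(1) ft(2) d c] .
  have finK: "finite ?K" unfolding closed_nbhd_def using open_nbhd_range[OF XC] ft
    by (meson finite_Un finite_atLeastAtMost finite_subset)
  have "insert c (es!t) \<subseteq> ?K" using c by (auto simp: closed_nbhd_def)
  then have "card (insert c (es!t)) \<le> card ?K" using finK card_mono by blast
  then have "d \<le> card ?K" using cn ft d by simp
  then have "card (es!s) < card ?K" using fs d by simp
  then have "\<not> ?K \<subseteq> es!s" using card_mono[OF fs(1)] leD by blast
  then obtain c' where c': "c' \<in> ?K" "c' \<notin> es!s" by blast
  let ?F = "es!s \<union> {c'}"
  have "?F \<subseteq> ?K" using sub c' by auto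
  moreover have "finite ?F" "card ?F = d" using fs c' d by auto
  ultimately have "?F \<in> ?X"
    using simplicial_at[OF so st(2)] by (auto simp: simplicial_def is_clique_def)
  moreover have "?X \<subseteq> dels C (take (Suc s) es)" using dels_antimono st by simp
  moreover have "dels C (take (Suc s) es) = del (dels C (take s es)) (es!s)"
    using dels_Suc st by simp
  ultimately show False by (auto simp: del_def)
qed

lemma closed_nbhd_props:
  assumes so: "simplicial_order d C es" and C: "C \<subseteq> all_dsets n d" and d: "0 < d" and j: "j < length es"
  shows "finite (closed_nbhd (dels C (take j es)) (es!j))"
    "card (closed_nbhd (dels C (take j es)) (es!j)) = d - 1 + order_N C es j"
    "closed_nbhd (dels C (take j es)) (es!j) \<subseteq> {1..n}"
proof -
  let ?X = "dels C (take j es)"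
  have XC: "?X \<subseteq> all_dsets n d" using dels_sub C by blast
  have ft: "finite (es!j)" "card (es!j) = d - 1" "es!j \<subseteq> {1..n}" using so_e_props[OF so C j] by auto
  have Nr: "open_nbhd ?X (es!j) \<subseteq> {1..n}" using open_nbhd_range[OF XC] .
  have fN: "finite (open_nbhd ?X (es!j))" using Nr finite_subset by blast
  have dis: "es!j \<inter> open_nbhd ?X (es!j) = {}" using open_nbhd_notin[OF XC ft(1) ft(2) d] by blast
  show "finite (closed_nbhd ?X (es!j))" using ft fN by (simp add: closed_nbhd_def)
  show "card (closed_nbhd ?X (es!j)) = d - 1 + order_N C es j"
    unfolding closed_nbhd_def order_N_def using card_Un_disjoint[OF ft(1) fN dis] ft by simp
  show "closed_nbhd ?X (es!j) \<subseteq> {1..n}" using ft Nr by (simp add: closed_nbhd_def)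
qed

lemma count_upper:
  assumes so: "simplicial_order d C es" and C: "C \<subseteq> all_dsets n d" and d: "0 < d" and i: "1 \<le> i"
  shows "card {j. j < length es \<and> order_N C es j = i} \<le> (n - i) choose (d - 1)"
proof -
  define J where "J = {j. j < length es \<and> order_N C es j = i}"
  have finJ: "finite J" unfolding J_def by simp
  define xs where "xs = sorted_list_of_set J"
  have lenxs: "length xs = card J" unfolding xs_def by simp
  have setxs: "set xs = J" unfolding xs_def using finJ by simp
  have sxs: "sorted_wrt (<) xs" unfolding xs_def by (rule strict_sorted_list_of_set)
  define m where "m = card J"
  define X where "X j = dels C (take j es)" for j
  define A where "A k = es ! (xs ! k)" for k
  define B where "B k = {1..n} - closed_nbhd (X (xs!k)) (es!(xs!k))" for k
  have inJ: "xs ! k \<in> J" if "k < m" for k using that setxs lenxs m_def nth_mem by metis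
  have inJ': "xs ! k < length es" "order_N C es (xs!k) = i" if "k < m" for k
    using inJ[OF that] unfolding J_def by auto
  show ?thesis
  proof (cases "m = 0")
    case True then show ?thesis unfolding J_def[symmetric] m_def by simp
  next
    case False
    then have m0: "0 < m" by simp
    have cl0: "card (closed_nbhd (X (xs!0)) (es!(xs!0))) = d - 1 + i"
      "closed_nbhd (X (xs!0)) (es!(xs!0)) \<subseteq> {1..n}"
      using closed_nbhd_props[OF so C d inJ'(1)[OF m0]] inJ'(2)[OF m0] unfolding X_def by auto
    have "card (closed_nbhd (X (xs!0)) (es!(xs!0))) \<le> n"
      using card_mono[OF _ cl0(2)] by simp
    then have din: "d - 1 + i \<le> n" using cl0 by simp
    have "m \<le> (d - 1 + (n - (d - 1 + i))) choose (d - 1)"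
    proof (rule skew_bollobas)
      fix t assume t: "t < m"
      have p: "finite (closed_nbhd (X (xs!t)) (es!(xs!t)))"
        "card (closed_nbhd (X (xs!t)) (es!(xs!t))) = d - 1 + i"
        "closed_nbhd (X (xs!t)) (es!(xs!t)) \<subseteq> {1..n}"
        using closed_nbhd_props[OF so C d inJ'(1)[OF t]] inJ'(2)[OF t] unfolding X_def by auto
      have e: "finite (A t)" "card (A t) = d - 1"
        using so_e_props[OF so C inJ'(1)[OF t]] unfolding A_def by auto
      have "card (B t) = n - (d - 1 + i)"
        unfolding B_def using card_Diff_subset[OF p(1) p(3)] p(2) by simp
      moreover have "A t \<inter> B t = {}" unfolding A_def B_def by (auto simp: closed_nbhd_def)
      ultimately show "finite (A t) \<and> card (A t) = d - 1 \<and> finite (B t) \<and> card (B t) = n - (d - 1 + i) \<and> A t \<inter> B t = {}"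
        using e by (simp add: B_def)
    next
      fix s t assume st: "s < t" "t < m"
      have lt: "xs ! s < xs ! t" using sorted_wrt_nth_less[OF sxs st(1)] st lenxs m_def by simp
      have ne: "open_nbhd (dels C (take (xs!t) es)) (es!(xs!t)) \<noteq> {}"
        using inJ'(2)[OF st(2)] i unfolding order_N_def by auto
      have ns: "\<not> A s \<subseteq> closed_nbhd (X (xs!t)) (es!(xs!t))"
        using so_notsub[OF so C d lt inJ'(1)[OF st(2)] ne] unfolding A_def X_def .
      have "A s \<subseteq> {1..n}" using so_e_props[OF so C inJ'(1)] st unfolding A_def by simp
      then show "A s \<inter> B t \<noteq> {}" using ns unfolding B_def by blast
    qed
    moreover have "d - 1 + (n - (d - 1 + i)) = n - i" using din d by simp
    ultimately show ?thesis unfolding J_def[symmetric] m_def by simp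
  qed
qed

lemma lam_upper:
  assumes "chordal_clutter n d C" "0 < d" "1 \<le> i"
  shows "lam d C i \<le> (n - i) choose (d - 1)"
proof -
  have ex: "\<exists>es. simplicial_order d C es" using assms by (simp add: chordal_clutter_def chordal_def)
  define es where "es = (SOME es. simplicial_order d C es)"
  have so: "simplicial_order d C es" unfolding es_def using someI_ex[OF ex] .
  have C: "C \<subseteq> all_dsets n d" using assms by (simp add: chordal_clutter_def uniform_clutter_def)
  show ?thesis unfolding lam_def Let_def es_def[symmetric] using count_upper[OF so C assms(2,3)] .
qed

lemma step_exists:
  assumes "P 0" "\<not> P L"
  shows "\<exists>j<L. P j \<and> \<not> P (Suc j)"
  using assms
proof (induction L)
  case 0 then show ?case by simp
next
  case (Suc L)
  then show ?case by (cases "P L") (auto intro: less_SucI)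
qed

lemma clique_realized:
  assumes so: "simplicial_order d C es" and C: "C \<subseteq> all_dsets n d" and d: "0 < d"
    and K: "finite K" "d \<le> card K" "is_clique d C K"
  shows "\<exists>j<length es. es!j \<subseteq> K \<and> K \<subseteq> closed_nbhd (dels C (take j es)) (es!j)"
proof -
  define P where "P j = (\<forall>F. F \<subseteq> K \<and> finite F \<and> card F = d \<longrightarrow> F \<in> dels C (take j es))" for j
  have P0: "P 0" using K(3) by (simp add: P_def is_clique_def)
  obtain F0 where F0: "F0 \<subseteq> K" "card F0 = d" "finite F0" using obtain_subset_with_card_n[OF K(2)] by blast
  have "dels C (take (length es) es) = {}" using so by (simp add: simplicial_order_def)
  then have PL: "\<not> P (length es)" using F0 by (auto simp: P_def)
  obtain j where j: "j < length es" "P j" "\<not> P (Suc j)" using step_exists[of P, OF P0 PL] by blast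
  let ?X = "dels C (take j es)"
  let ?e = "es ! j"
  obtain F where F: "F \<subseteq> K" "finite F" "card F = d" "F \<notin> dels C (take (Suc j) es)"
    using j(3) by (auto simp: P_def)
  have "F \<in> ?X" using j(2) F by (auto simp: P_def)
  then have eF: "?e \<subseteq> F" using F(4) dels_Suc[OF j(1), of C] by (auto simp: del_def)
  have XC: "?X \<subseteq> all_dsets n d" using dels_sub C by blast
  have ft: "finite ?e" "card ?e = d - 1" using so_e_props[OF so C j(1)] by auto
  have "K \<subseteq> closed_nbhd ?X ?e"
  proof
    fix c assume c: "c \<in> K"
    show "c \<in> closed_nbhd ?X ?e"
    proof (cases "c \<in> ?e")
      case True then show ?thesis by (simp add: closed_nbhd_def)
    next
      case False
      have "?e \<union> {c} \<subseteq> K" using eF F(1) c by auto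
      moreover have "finite (?e \<union> {c})" "card (?e \<union> {c}) = d" using ft False d by auto
      ultimately have "?e \<union> {c} \<in> ?X" using j(2) by (simp add: P_def)
      then show ?thesis by (simp add: closed_nbhd_def open_nbhd_def)
    qed
  qed
  then show ?thesis using j(1) eF F(1) by blast
qed

lemma so_prepend:
  assumes "simplicial d X e" "simplicial_order d (del X e) es"
  shows "simplicial_order d X (e # es)"
proof -
  have dl: "dels X (take (Suc j) (e # es)) = dels (del X e) (take j es)" for j
    by (simp add: dels_def)
  show ?thesis
    unfolding simplicial_order_def
  proof (intro conjI allI impI)
    fix i assume i: "i < length (e # es)"
    show "simplicial d (dels X (take i (e # es))) ((e # es) ! i)"
    proof (cases i)
      case 0 then show ?thesis using assms(1) by simp
    next
      case (Suc j)
      then show ?thesis using assms(2) i dl[of j] by (simp add: simplicial_order_def)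
    qed
  next
    show "dels X (e # es) = {}" using assms(2) by (simp add: dels_def simplicial_order_def)
  qed
qed

lemma chordal_empty: "chordal d {}"
  unfolding chordal_def simplicial_order_def by (rule exI[of _ "[]"]) simp

lemma enc_less_pow:
  assumes "finite e" "\<forall>x\<in>e. x < c"
  shows "set_encode e < 2 ^ c"
proof -
  have "set_encode e = (\<Sum>x\<in>e. 2 ^ x)" by (simp add: set_encode_def)
  also have "\<dots> \<le> (\<Sum>x\<in>{q. q < c}. (2::nat) ^ x)"
    by (rule sum_mono2) (use assms in auto)
  also have "\<dots> = 2 ^ c - 1" using mask_eq_sum_exp[where ?'a=nat, of c] by simp
  also have "\<dots> < 2 ^ c" by simp
  finally show ?thesis .
qed

lemma enc_ge_pow:
  assumes "finite e" "c \<in> e"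
  shows "2 ^ c \<le> set_encode e"
  unfolding set_encode_def using assms by (metis member_le_sum zero_le)

definition Wit :: "nat \<Rightarrow> nat \<Rightarrow> nat \<Rightarrow> nat set set" where
  "Wit n d i = {F \<in> all_dsets n d. F \<inter> {n - i + 1..n} \<noteq> {}}"

definition SS :: "nat \<Rightarrow> nat \<Rightarrow> nat \<Rightarrow> nat \<Rightarrow> nat set set" where
  "SS n d i k = {F \<in> Wit n d i. \<forall>e'. e' \<subseteq> {1..n} \<and> card e' = d - 1 \<and> set_encode e' < k \<longrightarrow> \<not> e' \<subseteq> F}"

lemma SS_sub: "SS n d i k \<subseteq> Wit n d i" by (auto simp: SS_def)

lemma wit_simplicial:
  assumes d: "0 < d" and e: "e \<subseteq> {1..n}" "card e = d - 1" and ex: "\<exists>F\<in>SS n d i (set_encode e). e \<subseteq> F"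
  shows "simplicial d (SS n d i (set_encode e)) e"
proof -
  let ?k = "set_encode e"
  let ?X = "SS n d i ?k"
  let ?N = "open_nbhd ?X e"
  have fe: "finite e" using e finite_subset by blast
  have XC: "?X \<subseteq> all_dsets n d" by (auto simp: SS_def Wit_def)
  have Nprop: "c \<in> {1..n} \<and> c \<notin> e \<and> (\<forall>x\<in>e. x < c)" if c: "c \<in> ?N" for c
  proof -
    have c1: "c \<in> {1..n}" using open_nbhd_range[OF XC] c by blast
    have c2: "c \<notin> e" using open_nbhd_notin[OF XC fe e(2) d c] .
    have "\<forall>x\<in>e. x < c"
    proof (rule ccontr)
      assume "\<not> (\<forall>x\<in>e. x < c)"
      then obtain x where x: "x \<in> e" "c \<le> x" by auto
      then have cx: "c < x" using c2 by (cases "c = x") auto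
      define e' where "e' = insert c (e - {x})"
      have fe': "finite (e - {x})" using fe by simp
      have "e' \<subseteq> {1..n}" using e c1 x unfolding e'_def by auto
      moreover have "card e' = d - 1"
      proof -
        have "0 < card e" using x(1) fe by (auto simp: card_gt_0_iff)
        then show ?thesis unfolding e'_def using c2 x fe e(2) by (simp add: card_Diff_singleton)
      qed
      moreover have "set_encode e' < ?k"
      proof -
        have "set_encode e' = 2 ^ c + set_encode (e - {x})" unfolding e'_def using fe' c2 by simp
        moreover have "?k = 2 ^ x + set_encode (e - {x})"
          using set_encode_insert[OF fe', of x] x(1) by (simp add: insert_absorb)
        moreover have "(2::nat) ^ c < 2 ^ x" using cx by simp
        ultimately show ?thesis by simp
      qed
      moreover have "e' \<subseteq> e \<union> {c}" unfolding e'_def by auto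
      moreover have "e \<union> {c} \<in> ?X" using c by (simp add: open_nbhd_def)
      ultimately show False unfolding SS_def by blast
    qed
    then show ?thesis using c1 c2 by blast
  qed
  have clique: "is_clique d ?X (closed_nbhd ?X e)"
    unfolding is_clique_def
  proof (intro allI impI)
    fix F assume F: "F \<subseteq> closed_nbhd ?X e \<and> finite F \<and> card F = d"
    have Fsub: "F \<subseteq> e \<union> ?N" using F by (simp add: closed_nbhd_def)
    have Fn: "F \<subseteq> {1..n}" using Fsub e Nprop by blast
    have "\<not> F \<subseteq> e"
    proof
      assume "F \<subseteq> e"
      then have "card F \<le> card e" using card_mono[OF fe] by simp
      then show False using F e(2) d by simp
    qed
    then obtain c where cF: "c \<in> F" "c \<in> ?N" using Fsub by blast
    have "e \<union> {c} \<in> Wit n d i" using cF(2) SS_sub[of n d i ?k] unfolding open_nbhd_def by blast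
    then have "(e \<union> {c}) \<inter> {n - i + 1..n} \<noteq> {}" by (simp add: Wit_def)
    then obtain y where y: "y \<in> e \<union> {c}" "y \<in> {n - i + 1..n}" by blast
    have cA: "c \<in> {n - i + 1..n}"
    proof (cases "y = c")
      case True then show ?thesis using y by simp
    next
      case False then have "y \<in> e" using y by auto
      then have "y < c" using Nprop[OF cF(2)] by auto
      then show ?thesis using y Nprop[OF cF(2)] by auto
    qed
    have FW: "F \<in> Wit n d i" using Fn F cF cA by (auto simp: Wit_def all_dsets_def)
    have "\<not> e' \<subseteq> F" if e': "e' \<subseteq> {1..n}" "card e' = d - 1" "set_encode e' < ?k" for e'
    proof
      assume eF: "e' \<subseteq> F"
      have fe'': "finite e'" using e'(1) finite_subset by blast
      show False
      proof (cases "e' \<subseteq> e")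
        case True
        then have "e' = e" using card_subset_eq[OF fe True] e'(2) e(2) by simp
        then show False using e'(3) by simp
      next
        case False
        then obtain c' where c': "c' \<in> e'" "c' \<notin> e" by blast
        then have "c' \<in> ?N" using eF Fsub by blast
        then have "\<forall>x\<in>e. x < c'" using Nprop by blast
        then have "?k < 2 ^ c'" using enc_less_pow[OF fe] by blast
        moreover have "2 ^ c' \<le> set_encode e'" using enc_ge_pow[OF fe'' c'(1)] .
        ultimately show False using e'(3) by simp
      qed
    qed
    then show "F \<in> ?X" using FW by (auto simp: SS_def)
  qed
  have "submax_circuit d ?X e" using fe e(2) ex by (simp add: submax_circuit_def)
  then show ?thesis using clique by (simp add: simplicial_def)
qed

lemma wit_chordal_SS:
  assumes d: "0 < d"
  shows "chordal d (SS n d i k)"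
proof (induction "card {e. e \<subseteq> {1..n} \<and> card e = d - 1 \<and> k \<le> set_encode e}" arbitrary: k rule: less_induct)
  case less
  define R where "R = {e. e \<subseteq> {1..n} \<and> card e = d - 1 \<and> k \<le> set_encode e}"
  have finR: "finite R" unfolding R_def by (rule finite_subset[of _ "Pow {1..n}"]) auto
  show ?case
  proof (cases "R = {}")
    case True
    have "SS n d i k = {}"
    proof (rule ccontr)
      assume "SS n d i k \<noteq> {}"
      then obtain F where F: "F \<in> SS n d i k" by blast
      then have FW: "F \<subseteq> {1..n}" "card F = d" by (auto simp: SS_def Wit_def all_dsets_def)
      then have "F \<noteq> {}" using d by auto
      then obtain x where x: "x \<in> F" by blast
      have fF: "finite F" using FW finite_subset by blast
      have "F - {x} \<subseteq> {1..n}" "card (F - {x}) = d - 1" using FW x fF by auto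
      moreover have "F - {x} \<notin> R" using True by simp
      ultimately have "set_encode (F - {x}) < k" unfolding R_def by auto
      then show False using F \<open>F - {x} \<subseteq> {1..n}\<close> \<open>card (F - {x}) = d - 1\<close> unfolding SS_def by blast
    qed
    then show ?thesis using chordal_empty by simp
  next
    case False
    define k0 where "k0 = Min (set_encode ` R)"
    have "k0 \<in> set_encode ` R" unfolding k0_def using finR False by simp
    then obtain e where eR: "e \<in> R" and ek: "set_encode e = k0" by auto
    have k0min: "k0 \<le> set_encode e'" if "e' \<in> R" for e'
      unfolding k0_def using finR that by simp
    have ep: "e \<subseteq> {1..n}" "card e = d - 1" "k \<le> k0" using eR ek unfolding R_def by auto
    have fe: "finite e" using ep finite_subset by blast
    have Sk: "SS n d i k = SS n d i k0"
    proof -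
      have "(set_encode e' < k) = (set_encode e' < k0)" if "e' \<subseteq> {1..n}" "card e' = d - 1" for e'
      proof
        assume "set_encode e' < k" then show "set_encode e' < k0" using ep by simp
      next
        assume a: "set_encode e' < k0"
        show "set_encode e' < k"
        proof (rule ccontr)
          assume "\<not> set_encode e' < k"
          then have "e' \<in> R" unfolding R_def using that by simp
          then show False using k0min a by fastforce
        qed
      qed
      then show ?thesis unfolding SS_def by blast
    qed
    have Sk1: "SS n d i (Suc k0) = del (SS n d i k0) e"
    proof -
      have "(set_encode e' < Suc k0) = (set_encode e' < k0 \<or> e' = e)" if "e' \<subseteq> {1..n}" "card e' = d - 1" for e'
      proof -
        have fe': "finite e'" using that finite_subset by blast
        have "set_encode e' = k0 \<longleftrightarrow> e' = e" using set_encode_eq[OF fe' fe] ek by auto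
        then show ?thesis by auto
      qed
      then show ?thesis unfolding SS_def del_def using ep by blast
    qed
    have lt: "card {e'. e' \<subseteq> {1..n} \<and> card e' = d - 1 \<and> Suc k0 \<le> set_encode e'} < card R"
    proof (rule psubset_card_mono[OF finR])
      show "{e'. e' \<subseteq> {1..n} \<and> card e' = d - 1 \<and> Suc k0 \<le> set_encode e'} \<subset> R"
      proof -
        have "{e'. e' \<subseteq> {1..n} \<and> card e' = d - 1 \<and> Suc k0 \<le> set_encode e'} \<subseteq> R"
          unfolding R_def using ep by auto
        moreover have "e \<notin> {e'. e' \<subseteq> {1..n} \<and> card e' = d - 1 \<and> Suc k0 \<le> set_encode e'}"
          using ek by simp
        ultimately show ?thesis using eR by blast
      qed
    qed
    have IH: "chordal d (SS n d i (Suc k0))" using less(1)[OF lt[unfolded R_def]] .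
    show ?thesis
    proof (cases "\<exists>F\<in>SS n d i k0. e \<subseteq> F")
      case True
      have "simplicial d (SS n d i k0) e" using wit_simplicial[OF d ep(1,2)] True ek by simp
      moreover obtain es where "simplicial_order d (del (SS n d i k0) e) es"
        using IH Sk1 by (auto simp: chordal_def)
      ultimately have "simplicial_order d (SS n d i k0) (e # es)" by (rule so_prepend)
      then show ?thesis using Sk by (auto simp: chordal_def)
    next
      case False
      then have "del (SS n d i k0) e = SS n d i k0" by (auto simp: del_def)
      then show ?thesis using IH Sk Sk1 by simp
    qed
  qed
qed

lemma wit_chordal:
  assumes "0 < d"
  shows "chordal d (Wit n d i)"
proof -
  have "SS n d i 0 = Wit n d i" by (auto simp: SS_def)
  then show ?thesis using wit_chordal_SS[OF assms, of n i 0] by simp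
qed

lemma wit_count:
  assumes d: "0 < d" and i: "1 \<le> i" and idn: "i \<le> n - d"
    and so: "simplicial_order d (Wit n d i) es"
  shows "(n - i) choose (d - 1) \<le> card {j. j < length es \<and> order_N (Wit n d i) es j = i}"
proof -
  let ?W = "Wit n d i"
  define As where "As = {n - i + 1..n}"
  define Bs where "Bs = {1..n - i}"
  define G where "G = {g. g \<subseteq> Bs \<and> card g = d - 1}"
  define J where "J = {j. j < length es \<and> order_N ?W es j = i}"
  define Q where "Q j = closed_nbhd (dels ?W (take j es)) (es!j)" for j
  have WC: "?W \<subseteq> all_dsets n d" by (auto simp: Wit_def)
  have cardAs: "card As = i" unfolding As_def using idn by simp
  have ABn: "{1..n} = As \<union> Bs" "As \<inter> Bs = {}" unfolding As_def Bs_def using idn by auto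
  have finAs: "finite As" "finite Bs" unfolding As_def Bs_def by auto
  have key: "\<exists>j\<in>J. Q j = g \<union> As" if g: "g \<in> G" for g
  proof -
    have g1: "g \<subseteq> Bs" "card g = d - 1" "finite g" using g finAs finite_subset unfolding G_def by auto
    let ?K = "g \<union> As"
    have dis: "g \<inter> As = {}" using g1 ABn by blast
    have cK: "card ?K = d - 1 + i" using card_Un_disjoint[OF g1(3) finAs(1) dis] g1 cardAs by simp
    have fK: "finite ?K" using g1 finAs by simp
    have Kn: "?K \<subseteq> {1..n}" using g1 ABn by blast
    have cl: "is_clique d ?W ?K"
      unfolding is_clique_def
    proof (intro allI impI)
      fix F assume F: "F \<subseteq> ?K \<and> finite F \<and> card F = d"
      have "F \<inter> As \<noteq> {}"
      proof
        assume "F \<inter> As = {}"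
        then have "F \<subseteq> g" using F by blast
        then have "card F \<le> d - 1" using card_mono[OF g1(3)] g1 by simp
        then show False using F d by simp
      qed
      then show "F \<in> ?W" using F Kn unfolding Wit_def all_dsets_def As_def by auto
    qed
    obtain j where j: "j < length es" "es!j \<subseteq> ?K" "?K \<subseteq> Q j"
      using clique_realized[OF so WC d fK _ cl] cK i unfolding Q_def by fastforce
    have Qp: "finite (Q j)" "card (Q j) = d - 1 + order_N ?W es j" "Q j \<subseteq> {1..n}"
      using closed_nbhd_props[OF so WC d j(1)] unfolding Q_def by auto
    have Qcl: "is_clique d ?W (Q j)"
    proof -
      have "is_clique d (dels ?W (take j es)) (Q j)"
        using simplicial_at[OF so j(1)] unfolding Q_def simplicial_def by simp
      then show ?thesis using dels_sub[of ?W j es] unfolding is_clique_def by blast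
    qed
    have QB: "card (Q j \<inter> Bs) \<le> d - 1"
    proof (rule ccontr)
      assume "\<not> card (Q j \<inter> Bs) \<le> d - 1"
      then have "d \<le> card (Q j \<inter> Bs)" by simp
      then obtain F where F: "F \<subseteq> Q j \<inter> Bs" "card F = d" "finite F"
        using obtain_subset_with_card_n by blast
      then have "F \<in> ?W" using Qcl unfolding is_clique_def by blast
      then have "F \<inter> As \<noteq> {}" unfolding Wit_def As_def by simp
      then show False using F ABn by blast
    qed
    have "g \<subseteq> Q j \<inter> Bs" using j(3) g1 by blast
    then have QBg: "Q j \<inter> Bs = g"
      using card_subset_eq[of "Q j \<inter> Bs" g] QB g1 Qp(1) card_mono[of "Q j \<inter> Bs" g]
      by (metis Int_lower1 finite_subset le_antisym)
    have "Q j \<subseteq> ?K" using Qp(3) QBg ABn by blast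
    then have QK: "Q j = ?K" using j(3) by blast
    then have "order_N ?W es j = i" using Qp(2) cK by simp
    then show ?thesis using j(1) QK unfolding J_def by blast
  qed
  define f where "f g = (SOME j. j \<in> J \<and> Q j = g \<union> As)" for g
  have f: "f g \<in> J" "Q (f g) = g \<union> As" if "g \<in> G" for g
    using someI_ex[OF key[OF that, unfolded Bex_def]] unfolding f_def by auto
  have inj: "inj_on f G"
  proof (rule inj_onI)
    fix g1 g2 assume g: "g1 \<in> G" "g2 \<in> G" "f g1 = f g2"
    then have "g1 \<union> As = g2 \<union> As" using f by metis
    moreover have "g1 \<inter> As = {}" "g2 \<inter> As = {}" using g ABn unfolding G_def by auto
    ultimately show "g1 = g2" by blast
  qed
  have cG: "card G = (n - i) choose (d - 1)" unfolding G_def Bs_def using n_subsets[of "{1..n-i}" "d-1"] by simp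
  have "(n - i) choose (d - 1) = card (f ` G)" using card_image[OF inj] cG by simp
  also have "\<dots> \<le> card J"
    by (rule card_mono) (use f(1) in \<open>auto simp: J_def\<close>)
  finally show ?thesis unfolding J_def .
qed

lemma max_part:
  assumes d: "0 < d" "d < n" and i: "1 \<le> i" "i \<le> n - d"
  shows "Max {lam d C i | C. chordal_clutter n d C \<and> C \<noteq> all_dsets n d} = (n - i) choose (d - 1)"
proof -
  let ?S = "{lam d C i | C. chordal_clutter n d C \<and> C \<noteq> all_dsets n d}"
  have finA: "finite (all_dsets n d)" unfolding all_dsets_def
    by (rule finite_subset[of _ "Pow {1..n}"]) auto
  have "?S \<subseteq> (\<lambda>C. lam d C i) ` Pow (all_dsets n d)"
    by (auto simp: chordal_clutter_def uniform_clutter_def)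
  then have finS: "finite ?S" using finA finite_subset by blast
  let ?W = "Wit n d i"
  have cW: "chordal_clutter n d ?W"
    using wit_chordal[OF d(1)] by (auto simp: chordal_clutter_def uniform_clutter_def Wit_def)
  have "{1..d} \<in> all_dsets n d" using d by (auto simp: all_dsets_def)
  moreover have "{1..d} \<notin> ?W" using i d by (auto simp: Wit_def)
  ultimately have nW: "?W \<noteq> all_dsets n d" by blast
  have ex: "\<exists>es. simplicial_order d ?W es" using cW by (simp add: chordal_clutter_def chordal_def)
  define es where "es = (SOME es. simplicial_order d ?W es)"
  have so: "simplicial_order d ?W es" unfolding es_def using someI_ex[OF ex] .
  have "(n - i) choose (d - 1) \<le> lam d ?W i"
    unfolding lam_def Let_def es_def[symmetric] using wit_count[OF d(1) i so] .
  moreover have "lam d ?W i \<le> (n - i) choose (d - 1)" using lam_upper[OF cW d(1) i(1)] .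
  ultimately have lW: "lam d ?W i = (n - i) choose (d - 1)" by simp
  show ?thesis
  proof (rule Max_eqI[OF finS])
    fix y assume "y \<in> ?S"
    then show "y \<le> (n - i) choose (d - 1)" using lam_upper[OF _ d(1) i(1)] by auto
  next
    show "(n - i) choose (d - 1) \<in> ?S" using cW nW lW by force
  qed
qed



definition Tsum :: "nat \<Rightarrow> nat \<Rightarrow> nat \<Rightarrow> int" where
  "Tsum n m i = (\<Sum>j = i..n. (-1) ^ (j - i) * int (n choose (m + j)) * int (j choose i))"

lemma Tsum0: "Tsum n 0 i = (if n = i then 1 else 0)"
proof (cases "i \<le> n")
  case False then show ?thesis by (simp add: Tsum_def)
next
  case True
  have "Tsum n 0 i = (\<Sum>j = i..n. (-1) ^ (j - i) * int (n choose i) * int ((n - i) choose (j - i)))"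
    unfolding Tsum_def
  proof (rule sum.cong[OF refl])
    fix j assume j: "j \<in> {i..n}"
    have "(n choose j) * (j choose i) = (n choose i) * ((n - i) choose (j - i))"
      using choose_mult[of i j n] j by simp
    then have "int (n choose j) * int (j choose i) = int (n choose i) * int ((n - i) choose (j - i))"
      by (metis of_nat_mult)
    then show "(-1) ^ (j - i) * int (n choose (0 + j)) * int (j choose i) =
          (-1) ^ (j - i) * int (n choose i) * int ((n - i) choose (j - i))"
      by (simp add: mult.assoc)
  qed
  also have "\<dots> = int (n choose i) * (\<Sum>j = i..n. (-1) ^ (j - i) * int ((n - i) choose (j - i)))"
    by (simp add: sum_distrib_left mult.commute mult.left_commute)
  also have "(\<Sum>j = i..n. (-1) ^ (j - i) * int ((n - i) choose (j - i))) = (\<Sum>k\<le>n - i. (-1) ^ k * int ((n - i) choose k))"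
    by (rule sum.reindex_bij_witness[of _ "\<lambda>k. k + i" "\<lambda>j. j - i"]) (use True in auto)
  also have "\<dots> = (if n = i then 1 else 0)"
  proof (cases "n = i")
    case True then show ?thesis by simp
  next
    case False
    then have "n - i > 0" using \<open>i \<le> n\<close> by simp
    then show ?thesis using choose_alternating_sum[of "n - i", where 'a=int] False by simp
  qed
  finally show ?thesis by simp
qed

lemma TsumSuc: "Tsum (Suc n) (Suc m) i = Tsum n (Suc m) i + Tsum n m i"
proof (cases "i \<le> Suc n")
  case False then show ?thesis by (simp add: Tsum_def)
next
  case True
  have "Tsum (Suc n) (Suc m) i = (\<Sum>j = i..n. (-1) ^ (j - i) * int (Suc n choose (Suc m + j)) * int (j choose i))"
  proof -
    have "{i..Suc n} = insert (Suc n) {i..n}" using True by auto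
    then show ?thesis unfolding Tsum_def by (simp add: binomial_eq_0)
  qed
  also have "\<dots> = (\<Sum>j = i..n. (-1) ^ (j - i) * int (n choose (Suc m + j)) * int (j choose i)
       + (-1) ^ (j - i) * int (n choose (m + j)) * int (j choose i))"
    by (rule sum.cong[OF refl]) (simp add: algebra_simps)
  also have "\<dots> = Tsum n (Suc m) i + Tsum n m i" unfolding Tsum_def by (simp add: sum.distrib)
  finally show ?thesis .
qed

lemma Tsum_formula:
  "Tsum n m i = (if m = 0 then (if n = i then 1 else 0) else if i < n then int ((n - i - 1) choose (m - 1)) else 0)"
proof (induction n arbitrary: m)
  case 0
  show ?case
  proof (cases m)
    case 0 then show ?thesis by (simp add: Tsum0)
  next
    case (Suc m') then show ?thesis by (cases i) (auto simp: Tsum_def)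
  qed
next
  case (Suc n)
  show ?case
  proof (cases m)
    case 0 then show ?thesis by (simp add: Tsum0)
  next
    case (Suc m')
    have r: "Tsum (Suc n) m i = Tsum n (Suc m') i + Tsum n m' i" using TsumSuc Suc by simp
    show ?thesis
    proof (cases m')
      case 0
      then show ?thesis using r Suc.IH[of "Suc m'"] Suc.IH[of m'] \<open>m = Suc m'\<close> by auto
    next
      case (Suc m'')
      show ?thesis
      proof (cases "i < n")
        case True
        then have e: "n - i = Suc (n - Suc i)" by simp
        show ?thesis using r Suc.IH[of "Suc m'"] Suc.IH[of m'] \<open>m = Suc m'\<close> True \<open>m' = Suc m''\<close>
          by (simp add: e)
      next
        case False
        then show ?thesis using r Suc.IH[of "Suc m'"] Suc.IH[of m'] \<open>m = Suc m'\<close> \<open>m' = Suc m''\<close>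
          by (cases "i = n") auto
      qed
    qed
  qed
qed

lemma alpha_identity:
  assumes d: "0 < d" and i: "1 \<le> i" "i \<le> n - d"
  shows "alpha i n d + int ((n - 1 - i) choose (d - 1)) = int ((n - i) choose (d - 1))"
proof -
  have "alpha i n d = Tsum n (d - 1) i"
  proof -
    have "alpha i n d = (\<Sum>j = i..n - d + 1. (-1) ^ (j - i) * int (n choose (d - 1 + j)) * int (j choose i))"
      unfolding alpha_def using d by (simp add: add.commute)
    also have "\<dots> = Tsum n (d - 1) i"
      unfolding Tsum_def
      by (rule sum.mono_neutral_left) (use d i in auto)
    finally show ?thesis .
  qed
  moreover have "i < n" using i d by simp
  ultimately show ?thesis
  proof (cases "d = 1")
    case True then show ?thesis using \<open>alpha i n d = _\<close> \<open>i < n\<close> by (simp add: Tsum_formula)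
  next
    case False
    then have "d - 1 = Suc (d - 2)" using d by simp
    then show ?thesis using \<open>alpha i n d = _\<close> \<open>i < n\<close> i
      by (simp add: Tsum_formula) (metis Suc_diff_Suc binomial_Suc_Suc diff_Suc_1 diff_diff_left of_nat_add plus_1_eq_Suc)
  qed
qed



lemma choose_mono_top: "n \<le> n' \<Longrightarrow> n choose k \<le> n' choose k"
proof (induction n' arbitrary: k)
  case 0 then show ?case by simp
next
  case (Suc n')
  show ?case
  proof (cases "n = Suc n'")
    case True then show ?thesis by simp
  next
    case False
    then have "n \<le> n'" using Suc by simp
    then have "n choose k \<le> n' choose k" using Suc by simp
    also have "\<dots> \<le> Suc n' choose k" by (cases k) auto
    finally show ?thesis .
  qed
qed

lemma choose_pascal: "1 \<le> i \<Longrightarrow> Suc x choose i = (x choose (i - 1)) + (x choose i)"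
  by (cases i) auto

definition valid :: "nat list \<Rightarrow> nat \<Rightarrow> bool" where
  "valid as i \<longleftrightarrow> as \<noteq> [] \<and> length as \<le> i \<and> sorted_wrt (>) as \<and> last as \<ge> i + 1 - length as"

definition Ssum :: "nat list \<Rightarrow> nat \<Rightarrow> nat" where
  "Ssum as i = (\<Sum>t < length as. (as ! t) choose (i - t))"

lemma mrep_iff: "macaulay_rep a i as \<longleftrightarrow> valid as i \<and> a = Ssum as i"
  by (simp add: macaulay_rep_def valid_def Ssum_def)

lemma Ssum_Nil[simp]: "Ssum [] i = 0" by (simp add: Ssum_def)

lemma Ssum_Cons: "Ssum (x # xs) i = (x choose i) + Ssum xs (i - 1)"
proof -
  have "Ssum (x # xs) i = (x choose i) + (\<Sum>t<length xs. xs ! t choose (i - Suc t))"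
    unfolding Ssum_def by (simp only: length_Cons sum.lessThan_Suc_shift nth_Cons_0 nth_Cons_Suc diff_zero)
  also have "(\<Sum>t<length xs. xs ! t choose (i - Suc t)) = Ssum xs (i - 1)"
    unfolding Ssum_def by (rule sum.cong) auto
  finally show ?thesis .
qed

lemma valid_single: "valid [x] i \<longleftrightarrow> 1 \<le> i \<and> i \<le> x"
  by (auto simp: valid_def)

lemma valid_Cons2:
  assumes "valid (x # y # r) i"
  shows "valid (y # r) (i - 1)" "y < x" "1 \<le> i"
  using assms by (auto simp: valid_def)

lemma valid_ConsI:
  assumes "valid (y # r) (i - 1)" "y < x" "2 \<le> i"
  shows "valid (x # y # r) i"
proof -
  have "\<forall>z\<in>set r. z < y" using assms(1) by (simp add: valid_def)
  then have "\<forall>z\<in>set (y # r). z < x" using assms(2) by auto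
  then show ?thesis using assms by (auto simp: valid_def)
qed

lemma valid_hd: "valid as i \<Longrightarrow> i \<le> hd as"
proof (induction as arbitrary: i)
  case Nil then show ?case by (simp add: valid_def)
next
  case (Cons x xs)
  show ?case
  proof (cases xs)
    case Nil then show ?thesis using Cons.prems by (simp add: valid_single)
  next
    case (Cons y r)
    have v: "valid (y # r) (i - 1)" "y < x" "1 \<le> i" using valid_Cons2 Cons.prems \<open>xs = y # r\<close> by auto
    have "i - 1 \<le> y" using Cons.IH[of "i - 1"] v \<open>xs = y # r\<close> by simp
    then show ?thesis using v by simp
  qed
qed

lemma Ssum_ge: "valid as i \<Longrightarrow> hd as choose i \<le> Ssum as i"
  by (cases as) (auto simp: Ssum_Cons valid_def)

lemma Ssum_pos: "valid as i \<Longrightarrow> 0 < Ssum as i"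
proof -
  assume v: "valid as i"
  have "0 < hd as choose i" using valid_hd[OF v] zero_less_binomial by blast
  then show ?thesis using Ssum_ge[OF v] by linarith
qed

lemma Ssum_lt: "valid as i \<Longrightarrow> Ssum as i < Suc (hd as) choose i"
proof (induction as arbitrary: i)
  case Nil then show ?case by (simp add: valid_def)
next
  case (Cons x xs)
  show ?case
  proof (cases xs)
    case Nil
    then have i: "1 \<le> i" "i \<le> x" using Cons.prems by (auto simp: valid_single)
    have "0 < x choose (i - 1)" using i by simp
    then show ?thesis using Nil choose_pascal[OF i(1), of x] by (simp add: Ssum_Cons)
  next
    case (Cons y r)
    have v: "valid (y # r) (i - 1)" "y < x" "1 \<le> i" using valid_Cons2 Cons.prems \<open>xs = y # r\<close> by auto
    have "Ssum xs (i - 1) < Suc y choose (i - 1)" using Cons.IH v \<open>xs = y # r\<close> by simp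
    also have "\<dots> \<le> x choose (i - 1)" using v by (intro choose_mono_top) simp
    finally have "Ssum xs (i - 1) < x choose (i - 1)" .
    then show ?thesis using choose_pascal[OF v(3), of x] by (simp add: Ssum_Cons)
  qed
qed

lemma hd_determined:
  assumes "valid as i" "valid bs i" "Ssum as i = Ssum bs i"
  shows "hd as = hd bs"
proof (rule ccontr)
  assume ne: "hd as \<noteq> hd bs"
  have "\<not> hd as < hd bs" if "valid as i" "valid bs i" "Ssum as i = Ssum bs i" for as bs
  proof
    assume lt: "hd as < hd bs"
    have "Ssum as i < Suc (hd as) choose i" using Ssum_lt[OF that(1)] .
    also have "\<dots> \<le> hd bs choose i" using lt by (intro choose_mono_top) simp
    also have "\<dots> \<le> Ssum bs i" using Ssum_ge[OF that(2)] .
    finally show False using that(3) by simp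
  qed
  then show False using assms ne by (metis linorder_neqE_nat)
qed

lemma rep_unique: "valid as i \<Longrightarrow> valid bs i \<Longrightarrow> Ssum as i = Ssum bs i \<Longrightarrow> as = bs"
proof (induction as arbitrary: bs i)
  case Nil then show ?case by (simp add: valid_def)
next
  case (Cons x xs)
  obtain y ys where bs: "bs = y # ys" using Cons.prems(2) by (cases bs) (auto simp: valid_def)
  have xy: "x = y" using hd_determined[OF Cons.prems] bs by simp
  have tails: "Ssum xs (i - 1) = Ssum ys (i - 1)" using Cons.prems(3) bs xy by (simp add: Ssum_Cons)
  show ?case
  proof (cases xs)
    case Nil
    show ?thesis
    proof (cases ys)
      case Nil then show ?thesis using \<open>xs = []\<close> bs xy by simp
    next
      case (Cons z zs)
      then have "valid ys (i - 1)" using valid_Cons2 Cons.prems(2) bs by simp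
      then have "0 < Ssum ys (i - 1)" by (rule Ssum_pos)
      then show ?thesis using tails \<open>xs = []\<close> by simp
    qed
  next
    case (Cons z zs)
    then have vx: "valid xs (i - 1)" using valid_Cons2 Cons.prems(1) by simp
    show ?thesis
    proof (cases ys)
      case Nil
      have "0 < Ssum xs (i - 1)" using vx by (rule Ssum_pos)
      then show ?thesis using tails Nil by simp
    next
      case (Cons w ws)
      then have vy: "valid ys (i - 1)" using valid_Cons2 Cons.prems(2) bs by simp
      have "xs = ys" using Cons.IH[OF vx vy tails] .
      then show ?thesis using bs xy by simp
    qed
  qed
qed

lemma choose_ge_self: "1 \<le> i \<Longrightarrow> i \<le> x \<Longrightarrow> x - i + 1 \<le> (x choose i)"
proof (induction x arbitrary: i)
  case 0 then show ?case by simp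
next
  case (Suc x)
  show ?case
  proof (cases "i = Suc x")
    case True then show ?thesis by simp
  next
    case False
    then have ix: "i \<le> x" using Suc by simp
    have "x - i + 1 \<le> (x choose i)" using Suc.IH[OF Suc.prems(1) ix] .
    moreover have "1 \<le> x choose (i - 1)" using ix zero_less_binomial[of "i - 1" x] by linarith
    ultimately show ?thesis using choose_pascal[OF Suc.prems(1), of x] ix by simp
  qed
qed

lemma rep_exists: "0 < a \<Longrightarrow> 1 \<le> i \<Longrightarrow> \<exists>as. valid as i \<and> Ssum as i = a"
proof (induction i arbitrary: a rule: less_induct)
  case (less i)
  have ex: "\<exists>x. a < Suc x choose i"
  proof
    have "a + i - i + 1 \<le> (a + i) choose i" using choose_ge_self[of i "a + i"] less by simp
    also have "\<dots> \<le> Suc (a + i) choose i" by (intro choose_mono_top) simp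
    finally show "a < Suc (a + i) choose i" by simp
  qed
  define x where "x = (LEAST x. a < Suc x choose i)"
  have x1: "a < Suc x choose i" unfolding x_def using LeastI_ex[OF ex] .
  have x0: "0 < x"
  proof (rule ccontr)
    assume "\<not> 0 < x"
    then have "x = 0" by simp
    then have "a < 1 choose i" using x1 by simp
    moreover have "1 choose i \<le> 1" by (cases i) (auto, case_tac nat, auto)
    ultimately show False using less by simp
  qed
  have x2: "x choose i \<le> a"
  proof -
    have "\<not> a < Suc (x - 1) choose i" unfolding x_def
      using not_less_Least[of "x - 1" "\<lambda>x. a < Suc x choose i"] x0 x_def by simp
    then show ?thesis using x0 by simp
  qed
  have xi: "i \<le> x"
  proof (rule ccontr)
    assume "\<not> i \<le> x"
    then have "Suc x \<le> i" by simp
    then have "Suc x choose i \<le> 1"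
      by (cases "Suc x = i") (auto simp: binomial_eq_0)
    then show False using x1 less by simp
  qed
  define r where "r = a - (x choose i)"
  have r_lt: "r < x choose (i - 1)" using x1 x2 choose_pascal[OF less(3), of x] unfolding r_def by simp
  show ?case
  proof (cases "r = 0")
    case True
    then have "valid [x] i" "Ssum [x] i = a" using xi less x2 unfolding r_def by (auto simp: valid_single Ssum_Cons)
    then show ?thesis by blast
  next
    case False
    have i2: "2 \<le> i"
    proof (rule ccontr)
      assume "\<not> 2 \<le> i" then have "i = 1" using less by simp
      then show False using r_lt False by simp
    qed
    have "\<exists>as. valid as (i - 1) \<and> Ssum as (i - 1) = r"
      using less.IH[of "i - 1" r] i2 False by simp
    then obtain bs where bs: "valid bs (i - 1)" "Ssum bs (i - 1) = r" by blast
    obtain y ys where byy: "bs = y # ys" using bs by (cases bs) (auto simp: valid_def)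
    have "y choose (i - 1) \<le> r" using Ssum_ge[OF bs(1)] bs(2) byy by simp
    then have "y choose (i - 1) < x choose (i - 1)" using r_lt by simp
    then have yx: "y < x" using choose_mono_top[of x y "i - 1"] by (meson leI not_le)
    have "valid (x # bs) i" using valid_ConsI[of y ys "i" x] bs(1) byy yx i2 by simp
    moreover have "Ssum (x # bs) i = a" using bs(2) x2 unfolding r_def by (simp add: Ssum_Cons)
    ultimately show ?thesis by blast
  qed
qed

lemma the_rep:
  assumes "0 < a" "1 \<le> i"
  shows "macaulay_rep a i (THE as. macaulay_rep a i as)"
proof -
  obtain as where as: "valid as i" "Ssum as i = a" using rep_exists[OF assms] by blast
  have "\<exists>!as. macaulay_rep a i as"
  proof
    show "macaulay_rep a i as" using as by (simp add: mrep_iff)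
  next
    fix bs assume "macaulay_rep a i bs"
    then show "bs = as" using rep_unique[of bs i as] as by (simp add: mrep_iff)
  qed
  then show ?thesis by (rule theI')
qed

lemma mac_upper_eq:
  assumes "0 < a" "1 \<le> i" "valid as i" "Ssum as i = a"
  shows "mac_upper a i = Ssum (map Suc as) (Suc i)"
proof -
  have "(THE as. macaulay_rep a i as) = as"
  proof -
    have "macaulay_rep a i (THE as. macaulay_rep a i as)" using the_rep[OF assms(1,2)] .
    then have v: "valid (THE as. macaulay_rep a i as) i" "Ssum (THE as. macaulay_rep a i as) i = a"
      by (auto simp: mrep_iff)
    show ?thesis using rep_unique[OF v(1) assms(3)] v(2) assms(4) by simp
  qed
  moreover have "(\<Sum>t < length as. (as ! t + 1) choose (i - t + 1)) = Ssum (map Suc as) (Suc i)"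
    unfolding Ssum_def length_map
  proof (rule sum.cong[OF refl])
    fix t assume "t \<in> {..<length as}"
    then have t: "t < length as" "t \<le> i" using assms(3) by (auto simp: valid_def)
    have "i - t + 1 = Suc i - t" using t(2) by simp
    then show "(as ! t + 1) choose (i - t + 1) = (map Suc as ! t) choose (Suc i - t)"
      using t(1) by simp
  qed
  ultimately show ?thesis using assms(1) by (simp add: mac_upper_def Let_def)
qed

lemma valid_map_Suc: "valid as i \<Longrightarrow> valid (map Suc as) (Suc i)"
  by (auto simp: valid_def sorted_wrt_map last_map)

lemma mac_strict:
  assumes "1 \<le> k" "a < b choose k"
  shows "mac_upper a k < Suc b choose Suc k"
proof (cases "a = 0")
  case True
  have "k \<le> b" using assms by (metis binomial_eq_0 not_less0 not_le)
  then have "0 < Suc b choose Suc k" by simp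
  then show ?thesis using True by (simp add: mac_upper_def)
next
  case False
  then obtain as where as: "valid as k" "Ssum as k = a" using rep_exists assms by blast
  have hb: "hd as < b"
  proof (rule ccontr)
    assume "\<not> hd as < b"
    then have "b choose k \<le> hd as choose k" by (intro choose_mono_top) simp
    then show False using Ssum_ge[OF as(1)] as(2) assms(2) by simp
  qed
  have "mac_upper a k = Ssum (map Suc as) (Suc k)" using mac_upper_eq[OF _ assms(1) as] False by simp
  also have "\<dots> < Suc (hd (map Suc as)) choose Suc k" using Ssum_lt[OF valid_map_Suc[OF as(1)]] .
  also have "\<dots> \<le> Suc b choose Suc k"
  proof -
    have "as \<noteq> []" using as by (simp add: valid_def)
    then have "Suc (hd (map Suc as)) \<le> Suc b" using hb by (simp add: hd_map)
    then show ?thesis by (rule choose_mono_top)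
  qed
  finally show ?thesis .
qed

lemma mac_at_max:
  assumes "1 \<le> k" "k \<le> b"
  shows "mac_upper (b choose k) k = Suc b choose Suc k"
proof -
  have v: "valid [b] k" "Ssum [b] k = b choose k" using assms by (auto simp: valid_single Ssum_Cons)
  have "0 < b choose k" using assms by simp
  then show ?thesis using mac_upper_eq[OF _ assms(1) v] by (simp add: Ssum_Cons)
qed

lemma mac_le:
  assumes "1 \<le> k" "k \<le> b" "a \<le> b choose k"
  shows "mac_upper a k \<le> Suc b choose Suc k"
proof (cases "a = b choose k")
  case True then show ?thesis using mac_at_max[OF assms(1,2)] by simp
next
  case False
  then have "a < b choose k" using assms(3) by simp
  then show ?thesis using mac_strict[OF assms(1), of a b] by simp
qed

lemma mac_zero: "mac_upper 0 k = 0" by (simp add: mac_upper_def)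

lemma mseq_bounds:
  assumes d: "0 < d" and M: "M_sequence l m" and l1: "l 1 \<le> d"
  shows "k \<le> m \<Longrightarrow> l k \<le> (d - 1 + k) choose k"
proof (induction k)
  case 0 then show ?case using M by (simp add: M_sequence_def)
next
  case (Suc k)
  show ?case
  proof (cases k)
    case 0 then show ?thesis using l1 d by simp
  next
    case (Suc k')
    have lk: "l k \<le> (d - 1 + k) choose k" using Suc.IH Suc.prems by simp
    have "l (Suc k) \<le> mac_upper (l k) k" using M Suc.prems \<open>k = Suc k'\<close> by (simp add: M_sequence_def)
    also have "\<dots> \<le> Suc (d - 1 + k) choose Suc k" using mac_le[OF _ _ lk] \<open>k = Suc k'\<close> by simp
    also have "Suc (d - 1 + k) = d - 1 + Suc k" by simp
    finally show ?thesis by simp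
  qed
qed

lemma mseq_back:
  assumes d: "0 < d" and M: "M_sequence l m" and l1: "l 1 \<le> d"
    and k: "Suc k \<le> m" and eq: "l (Suc k) = (d - 1 + Suc k) choose Suc k"
  shows "l k = (d - 1 + k) choose k"
proof (cases k)
  case 0 then show ?thesis using M by (simp add: M_sequence_def)
next
  case (Suc k')
  have le: "l k \<le> (d - 1 + k) choose k" using mseq_bounds[OF d M l1] k by simp
  show ?thesis
  proof (rule ccontr)
    assume "l k \<noteq> (d - 1 + k) choose k"
    then have lt: "l k < (d - 1 + k) choose k" using le by simp
    have "l (Suc k) \<le> mac_upper (l k) k" using M k Suc by (simp add: M_sequence_def)
    also have "\<dots> < Suc (d - 1 + k) choose Suc k" using mac_strict[OF _ lt] Suc by simp
    finally show False using eq by simp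
  qed
qed

lemma mseq_zero:
  assumes M: "M_sequence l m" and k: "1 \<le> k" "Suc k \<le> m" and z: "l k = 0"
  shows "l (Suc k) = 0"
proof -
  have "l (Suc k) \<le> mac_upper (l k) k" using M k by (simp add: M_sequence_def)
  then show ?thesis using z by (simp add: mac_zero)
qed

lemma part_b_core:
  assumes d: "0 < d" and M: "M_sequence l m" and l1: "l 1 \<le> d" and r: "r < m"
  shows "(int (l r) - int (l (Suc r)) = int ((d - 1 + r) choose r)) \<longleftrightarrow>
         ((\<forall>k\<le>r. l k = (d - 1 + k) choose k) \<and> (\<forall>k. r < k \<and> k \<le> m \<longrightarrow> l k = 0))"
proof
  assume h: "int (l r) - int (l (Suc r)) = int ((d - 1 + r) choose r)"
  have "l r \<le> (d - 1 + r) choose r" using mseq_bounds[OF d M l1] r by simp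
  then have lr: "l r = (d - 1 + r) choose r" and lr1: "l (Suc r) = 0" using h by auto
  have A: "l (r - q) = (d - 1 + (r - q)) choose (r - q)" if "q \<le> r" for q
    using that
  proof (induction q)
    case 0 then show ?case using lr by simp
  next
    case (Suc q)
    have e: "Suc (r - Suc q) = r - q" using Suc.prems by simp
    have "l (Suc (r - Suc q)) = (d - 1 + Suc (r - Suc q)) choose Suc (r - Suc q)"
      using Suc.IH Suc.prems e by simp
    then show ?case using mseq_back[OF d M l1, of "r - Suc q"] r Suc.prems e by simp
  qed
  have B: "l (Suc r + q) = 0" if "Suc r + q \<le> m" for q
    using that
  proof (induction q)
    case 0 then show ?case using lr1 by simp
  next
    case (Suc q)
    then have "l (Suc r + q) = 0" by simp
    then show ?case using mseq_zero[OF M, of "Suc r + q"] Suc.prems by simp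
  qed
  show "(\<forall>k\<le>r. l k = (d - 1 + k) choose k) \<and> (\<forall>k. r < k \<and> k \<le> m \<longrightarrow> l k = 0)"
  proof (intro conjI allI impI)
    fix k assume "k \<le> r" then show "l k = (d - 1 + k) choose k" using A[of "r - k"] by simp
  next
    fix k assume k: "r < k \<and> k \<le> m"
    then have "Suc r + (k - Suc r) = k" by simp
    then show "l k = 0" using B[of "k - Suc r"] k by simp
  qed
next
  assume "(\<forall>k\<le>r. l k = (d - 1 + k) choose k) \<and> (\<forall>k. r < k \<and> k \<le> m \<longrightarrow> l k = 0)"
  then have "l r = (d - 1 + r) choose r" "l (Suc r) = 0" using r by auto
  then show "int (l r) - int (l (Suc r)) = int ((d - 1 + r) choose r)" by simp
qed

lemma part_b:
  assumes d: "0 < d" "d < n" and i: "1 \<le> i" "i \<le> n - d"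
    and M: "M_sequence l (n - d)" and l1: "l 1 \<le> d"
    and hyp: "int (lam d C i) = alpha i n d + int (l (n - d - i)) - int (l (n - d - i + 1))"
  shows "(int (lam d C i) = alpha i n d + int ((n - 1 - i) choose (d - 1))) \<longleftrightarrow>
     ((\<forall>j. i \<le> j \<and> j \<le> n - d \<longrightarrow> l (n - d - j) = (n - 1 - j) choose (d - 1))
       \<and> (\<forall>j < i. l (n - d - j) = 0))"
proof -
  define r where "r = n - d - i"
  have r: "r < n - d" using i unfolding r_def by simp
  have bin: "(n - 1 - j) choose (d - 1) = (d - 1 + (n - d - j)) choose (n - d - j)" if "j \<le> n - d" for j
  proof -
    have e: "n - 1 - j = d - 1 + (n - d - j)" using that d by simp
    show ?thesis unfolding e using binomial_symmetric[of "d - 1" "d - 1 + (n - d - j)"] by simp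
  qed
  have "(int (lam d C i) = alpha i n d + int ((n - 1 - i) choose (d - 1))) \<longleftrightarrow>
        (int (l r) - int (l (Suc r)) = int ((d - 1 + r) choose r))"
    using hyp bin[of i] i unfolding r_def by auto
  also have "\<dots> \<longleftrightarrow> ((\<forall>k\<le>r. l k = (d - 1 + k) choose k) \<and> (\<forall>k. r < k \<and> k \<le> n - d \<longrightarrow> l k = 0))"
    by (rule part_b_core[OF d(1) M l1 r])
  also have "\<dots> \<longleftrightarrow> ((\<forall>j. i \<le> j \<and> j \<le> n - d \<longrightarrow> l (n - d - j) = (n - 1 - j) choose (d - 1))
       \<and> (\<forall>j < i. l (n - d - j) = 0))"
  proof (intro iffI conjI allI impI)
    fix j assume h: "(\<forall>k\<le>r. l k = (d - 1 + k) choose k) \<and> (\<forall>k. r < k \<and> k \<le> n - d \<longrightarrow> l k = 0)"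
    { assume j: "i \<le> j \<and> j \<le> n - d"
      then show "l (n - d - j) = (n - 1 - j) choose (d - 1)" using h bin[of j] unfolding r_def by auto }
    { assume j: "j < i"
      then have "r < n - d - j \<and> n - d - j \<le> n - d" using i unfolding r_def by arith
      then show "l (n - d - j) = 0" using h by blast }
  next
    fix k assume h: "(\<forall>j. i \<le> j \<and> j \<le> n - d \<longrightarrow> l (n - d - j) = (n - 1 - j) choose (d - 1))
       \<and> (\<forall>j < i. l (n - d - j) = 0)"
    { assume k: "k \<le> r"
      have "i \<le> n - d - k \<and> n - d - k \<le> n - d" using k i unfolding r_def by arith
      then have "l (n - d - (n - d - k)) = (n - 1 - (n - d - k)) choose (d - 1)"
        using h by blast
      moreover have "n - d - (n - d - k) = k" using k r by simp
      ultimately show "l k = (d - 1 + k) choose k" using bin[of "n - d - k"] by simp }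
    { assume k: "r < k \<and> k \<le> n - d"
      have "n - d - k < i" using k i unfolding r_def by arith
      then have "l (n - d - (n - d - k)) = 0" using h by blast
      moreover have "n - d - (n - d - k) = k" using k by arith
      ultimately show "l k = 0" by simp }
  qed
  finally show ?thesis .
qed



theorem corollary4p4:
  fixes n d i :: nat
  assumes "0 < d" and "d < n" and "1 \<le> i" and "i \<le> n - d"
  shows "int (Max {lam d C i | C. chordal_clutter n d C \<and> C \<noteq> all_dsets n d})
           = alpha i n d + int ((n - 1 - i) choose (d - 1))
       \<and> (\<forall>C l. chordal_clutter n d C \<and> M_sequence l (n - d) \<and> l 1 \<le> d \<and>
            (\<forall>k < n - d. int (lam d C (n - d - k)) = alpha (n - d - k) n d + int (l k) - int (l (k + 1)))
          \<longrightarrow> (int (lam d C i) = alpha i n d + int ((n - 1 - i) choose (d - 1))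
               \<longleftrightarrow> (\<forall>j. i \<le> j \<and> j \<le> n - d \<longrightarrow> l (n - d - j) = (n - 1 - j) choose (d - 1))
                 \<and> (\<forall>j < i. l (n - d - j) = 0)))"
proof (intro conjI allI impI)
  show "int (Max {lam d C i | C. chordal_clutter n d C \<and> C \<noteq> all_dsets n d})
           = alpha i n d + int ((n - 1 - i) choose (d - 1))"
    using max_part[OF assms] alpha_identity[OF assms(1,3,4)] by simp
next
  fix C l
  assume h: "chordal_clutter n d C \<and> M_sequence l (n - d) \<and> l 1 \<le> d \<and>
            (\<forall>k < n - d. int (lam d C (n - d - k)) = alpha (n - d - k) n d + int (l k) - int (l (k + 1)))"
  have k: "n - d - i < n - d" using assms by simp
  have e: "n - d - (n - d - i) = i" using assms by simp
  have hyp: "int (lam d C i) = alpha i n d + int (l (n - d - i)) - int (l (n - d - i + 1))"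
    using h k e by metis
  show "(int (lam d C i) = alpha i n d + int ((n - 1 - i) choose (d - 1))
               \<longleftrightarrow> (\<forall>j. i \<le> j \<and> j \<le> n - d \<longrightarrow> l (n - d - j) = (n - 1 - j) choose (d - 1))
                 \<and> (\<forall>j < i. l (n - d - j) = 0))"
    using part_b[OF assms, of l C] h hyp by blast
qed

end
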